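(* On the Euler graph, under the symmetric measure $\mu$, the vertex process satisfies $V_n\to\infty$ and $|n|-V_n\to\infty$ almost surely as $n\to-\infty$.
   Context: The Euler graph has, at each level $n\le0$, vertices labelled $0,\dots,|n|$; vertex $v$ at level $n$ is connected to vertex $v$ at level $n-1$ by $v+1$ edges and to vertex $v+1$ at level $n-1$ by $|n|+1-v$ edges (so $|n|+2$ edges down from $v$). A random path is a sequence of connected edges starting from the single vertex at level 0; $V_n$ is its vertex at level $n$. The symmetric measure $\mu$ is the law of the random path in which, for each $n\le0$, given the path from level $0$ down to level $n$, the next edge (between levels $n$ and $n-1$) is uniformly distributed among the $|n|+2$ edges joining $V_n$ to level $n-1$. Equivalently $(V_n)$ is Markov with $\mathbb P(V_{n-1}=v\mid V_n=v)=\frac{v+1}{|n|+2}$ and $\mathbb P(V_{n-1}=v+1\mid V_n=v)=\frac{|n|+1-v}{|n|+2}$. *)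

theory Defs
  imports "HOL-Probability.Probability"
begin

text \<open>Levels n \<le> 0 are indexed by k = |n| :: nat, so V k stands for V_{-k}.
  euler_step k v w is the probability of going from vertex v at level -k to
  vertex w at level -(k+1) under the symmetric measure.\<close>
definition euler_step :: "nat \<Rightarrow> nat \<Rightarrow> nat \<Rightarrow> real" where
  "euler_step k v w =
     (if w = v then (real v + 1) / (real k + 2)
      else if w = v + 1 then (real k + 1 - real v) / (real k + 2)
      else 0)"

definition euler_path_prob :: "nat \<Rightarrow> (nat \<Rightarrow> nat) \<Rightarrow> real" where
  "euler_path_prob k vs =
     (if vs 0 = 0 then 1 else 0) * (\<Prod>i<k. euler_step i (vs i) (vs (Suc i)))"

end

theory Submission imports Defs "HOL-Real_Asymp.Real_Asymp" begin

definition S :: "nat \<Rightarrow> nat \<Rightarrow> nat pmf" where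
  "S k v = map_pmf (\<lambda>b. if b then Suc v else v) (bernoulli_pmf ((real k + 1 - real v)/(real k + 2)))"

fun Q :: "nat \<Rightarrow> nat list pmf" where
  "Q 0 = return_pmf [0]"
| "Q (Suc k) = bind_pmf (Q k) (\<lambda>xs. map_pmf (\<lambda>w. xs @ [w]) (S k (last xs)))"

definition R :: "nat \<Rightarrow> nat pmf" where "R k = map_pmf last (Q k)"

lemma set_S: "set_pmf (S k v) \<subseteq> {v, Suc v}"
  unfolding S_def by auto

lemma R_Suc: "R (Suc k) = bind_pmf (R k) (S k)"
  unfolding R_def by (simp add: map_bind_pmf map_pmf_comp bind_map_pmf)

lemma set_R: "set_pmf (R k) \<subseteq> {..k}"
proof (induction k)
  case 0 then show ?case by (simp add: R_def)
next
  case (Suc k) then show ?case using set_S unfolding R_Suc by fastforce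
qed

lemma pmf_S: assumes "v \<le> Suc k" shows "pmf (S k v) w = euler_step k v w"
proof -
  let ?p = "(real k + 1 - real v)/(real k + 2)"
  have p: "0 \<le> ?p" "?p \<le> 1" using assms by (auto simp: field_simps)
  have "pmf (S k v) w = measure (bernoulli_pmf ?p) ((\<lambda>b. if b then Suc v else v) -` {w})"
    unfolding S_def pmf_map by simp
  also have "\<dots> = euler_step k v w"
  proof (cases "w = v")
    case True
    then have "(\<lambda>b. if b then Suc v else v) -` {w} = {False}" by auto
    then show ?thesis using True p by (simp add: measure_pmf_single euler_step_def field_simps)
  next
    case F: False
    show ?thesis
    proof (cases "w = Suc v")
      case True
      then have "(\<lambda>b. if b then Suc v else v) -` {w} = {True}" by (auto split: if_splits)
      then show ?thesis using True p by (simp add: measure_pmf_single euler_step_def field_simps)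
    next
      case False
      then have "(\<lambda>b. if b then Suc v else v) -` {w} = {}" using F by (auto split: if_splits)
      then show ?thesis using F False by (simp add: euler_step_def)
    qed
  qed
  finally show ?thesis .
qed

lemma set_Q_len: "xs \<in> set_pmf (Q k) \<Longrightarrow> length xs = Suc k"
  by (induction k arbitrary: xs) auto

lemma epp_cong: "(\<And>i. i \<le> k \<Longrightarrow> vs i = ws i) \<Longrightarrow> euler_path_prob k vs = euler_path_prob k ws"
  unfolding euler_path_prob_def by (auto intro!: prod.cong)

lemma epp_Suc: "euler_path_prob (Suc k) vs = euler_path_prob k vs * euler_step k (vs k) (vs (Suc k))"
  unfolding euler_path_prob_def by simp

lemma pmf_map_append: "pmf (map_pmf (\<lambda>w. x @ [w]) p) ys = (if ys \<noteq> [] \<and> x = butlast ys then pmf p (last ys) else 0)"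
proof -
  have "(\<lambda>w. x @ [w]) -` {ys} = (if ys \<noteq> [] \<and> x = butlast ys then {last ys} else {})"
    by (auto simp: snoc_eq_iff_butlast)
  then show ?thesis by (simp add: pmf_map measure_pmf_single)
qed

lemma pmf_Q: "pmf (Q k) xs = (if length xs = Suc k then euler_path_prob k (\<lambda>i. xs ! i) else 0)"
proof (induction k arbitrary: xs)
  case 0
  show ?case
  proof (cases "length xs = 1")
    case True
    then obtain x where "xs = [x]" by (metis One_nat_def length_0_conv length_Suc_conv)
    then show ?thesis by (auto simp: euler_path_prob_def)
  next
    case False then show ?thesis by (auto simp: indicator_def)
  qed
next
  case (Suc k)
  let ?b = "butlast xs"
  have "pmf (Q (Suc k)) xs = (\<integral>x. (if xs \<noteq> [] \<and> x = ?b then pmf (S k (last x)) (last xs) else 0) \<partial>measure_pmf (Q k))"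
    by (simp add: pmf_bind pmf_map_append)
  also have "\<dots> = (\<Sum>a\<in>{?b}. (if xs \<noteq> [] \<and> a = ?b then pmf (S k (last a)) (last xs) else 0) * pmf (Q k) a)"
    by (rule integral_measure_pmf_real) (auto split: if_splits)
  also have "\<dots> = (if xs \<noteq> [] then pmf (S k (last ?b)) (last xs) * pmf (Q k) ?b else 0)" by simp
  also have "\<dots> = (if length xs = Suc (Suc k) then euler_path_prob (Suc k) (\<lambda>i. xs ! i) else 0)"
  proof (cases "length xs = Suc (Suc k)")
    case len: True
    then have ne: "xs \<noteq> []" by auto
    have lb: "length ?b = Suc k" using len by simp
    have eq1: "euler_path_prob k (\<lambda>i. ?b ! i) = euler_path_prob k (\<lambda>i. xs ! i)"
      by (rule epp_cong) (simp add: nth_butlast len less_Suc_eq_le)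
    have "?b \<noteq> []" using len by (auto simp: butlast_conv_take)
    then have lastb: "last ?b = xs ! k" using lb len
      by (simp add: last_conv_nth nth_butlast)
    have lastx: "last xs = xs ! Suc k" using len ne by (simp add: last_conv_nth)
    show ?thesis
    proof (cases "pmf (Q k) ?b = 0")
      case True
      then have "euler_path_prob k (\<lambda>i. xs ! i) = 0" using Suc.IH[of ?b] lb eq1 by simp
      then show ?thesis using True len by (simp add: epp_Suc)
    next
      case False
      then have "?b \<in> set_pmf (Q k)" by (simp add: set_pmf_iff)
      then have "last ?b \<in> set_pmf (R k)" by (simp add: R_def)
      then have "last ?b \<le> k" using set_R by blast
      then have "pmf (S k (last ?b)) (last xs) = euler_step k (xs ! k) (xs ! Suc k)"
        using pmf_S[of "last ?b" k] lastb lastx by simp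
      then show ?thesis using len ne Suc.IH[of ?b] lb eq1 by (simp add: epp_Suc)
    qed
  next
    case False
    then have "length ?b \<noteq> Suc k" by (cases "xs = []") auto
    then show ?thesis using Suc.IH[of ?b] False by simp
  qed
  finally show ?case .
qed


lemma set_Q_step: "xs \<in> set_pmf (Q (Suc i)) \<Longrightarrow> xs ! Suc i = xs ! i \<or> xs ! Suc i = Suc (xs ! i)"
proof -
  assume "xs \<in> set_pmf (Q (Suc i))"
  then obtain ys w where ys: "ys \<in> set_pmf (Q i)" and w: "w \<in> set_pmf (S i (last ys))" and xs: "xs = ys @ [w]"
    by auto
  have l: "length ys = Suc i" using set_Q_len[OF ys] .
  then have "ys \<noteq> []" by auto
  then have "last ys = ys ! i" using l by (simp add: last_conv_nth)
  moreover have "xs ! Suc i = w" "xs ! i = ys ! i" using l xs by (auto simp: nth_append)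
  ultimately show ?thesis using w set_S by auto
qed


lemma measure_bind_pmf_real: "measure (bind_pmf M N) X = (\<integral>x. measure (N x) X \<partial>measure_pmf M)"
proof -
  have "ennreal (measure (bind_pmf M N) X) = emeasure (bind_pmf M N) X"
    by (rule measure_pmf.emeasure_eq_measure[symmetric])
  also have "\<dots> = (\<integral>\<^sup>+x. emeasure (N x) X \<partial>measure_pmf M)"
    by (rule emeasure_bind_pmf)
  also have "\<dots> = (\<integral>\<^sup>+x. ennreal (measure (N x) X) \<partial>measure_pmf M)"
    by (simp only: measure_pmf.emeasure_eq_measure)
  also have "\<dots> = ennreal (\<integral>x. measure (N x) X \<partial>measure_pmf M)"
    by (rule nn_integral_eq_integral) (auto intro!: measure_pmf.integrable_const_bound[where B=1])
  finally show ?thesis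
    by (subst (asm) ennreal_inj) (auto intro!: integral_nonneg_AE)
qed

lemma S_le_sum: "measure (S k v) A \<le> sum (pmf (S k v)) (A \<inter> {v, Suc v})"
proof -
  have "measure (S k v) A = measure (S k v) (A \<inter> set_pmf (S k v))" by (simp add: measure_Int_set_pmf)
  also have "\<dots> \<le> measure (S k v) (A \<inter> {v, Suc v})"
    using set_S[of k v] by (intro measure_pmf.finite_measure_mono) auto
  also have "\<dots> = sum (pmf (S k v)) (A \<inter> {v, Suc v})" by (rule measure_measure_pmf_finite) auto
  finally show ?thesis .
qed

lemma S_bound1: assumes "v \<le> k"
  shows "measure (S k v) {u. u \<le> m} \<le> (if v < m then 1 else 0) + (real m + 1)/(real k + 2) * (if v \<le> m then 1 else 0)"
proof (cases "v < m")
  case True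
  have h: "measure (S k v) {u. u \<le> m} \<le> 1" by simp
  have "0 \<le> (real m + 1)/(real k + 2)" by simp
  then have "measure (S k v) {u. u \<le> m} \<le> 1 + (real m + 1)/(real k + 2)" using h by linarith
  then show ?thesis using True by simp
next
  case False
  show ?thesis
  proof (cases "v = m")
    case True
    then have "{u. u \<le> m} \<inter> {v, Suc v} = {v}" by auto
    then have "measure (S k v) {u. u \<le> m} \<le> pmf (S k v) v" using S_le_sum[of k v "{u. u \<le> m}"] by simp
    also have "\<dots> = (real m + 1)/(real k + 2)" using True assms by (simp add: pmf_S euler_step_def)
    finally show ?thesis using True by simp
  next
    case F2: False
    then have "{u. u \<le> m} \<inter> {v, Suc v} = {}" using False by auto
    then have "measure (S k v) {u. u \<le> m} \<le> 0" using S_le_sum[of k v "{u. u \<le> m}"] by simp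
    then show ?thesis using False F2 by simp
  qed
qed

lemma S_bound2: assumes "v \<le> k"
  shows "measure (S k v) {u. Suc k \<le> u + m} \<le> (if k < v + m then 1 else 0) + (real m + 1)/(real k + 2) * (if k \<le> v + m then 1 else 0)"
proof (cases "k < v + m")
  case True
  have h: "measure (S k v) {u. Suc k \<le> u + m} \<le> 1" by simp
  have "0 \<le> (real m + 1)/(real k + 2)" by simp
  then have "measure (S k v) {u. Suc k \<le> u + m} \<le> 1 + (real m + 1)/(real k + 2)" using h by linarith
  then show ?thesis using True by simp
next
  case False
  show ?thesis
  proof (cases "k = v + m")
    case True
    then have "{u. Suc k \<le> u + m} \<inter> {v, Suc v} = {Suc v}" by auto
    then have "measure (S k v) {u. Suc k \<le> u + m} \<le> pmf (S k v) (Suc v)" using S_le_sum[of k v "{u. Suc k \<le> u + m}"] by simp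
    also have "\<dots> = (real m + 1)/(real k + 2)" using True assms by (simp add: pmf_S euler_step_def)
    finally show ?thesis using True by simp
  next
    case F2: False
    then have "{u. Suc k \<le> u + m} \<inter> {v, Suc v} = {}" using False by auto
    then have "measure (S k v) {u. Suc k \<le> u + m} \<le> 0" using S_le_sum[of k v "{u. Suc k \<le> u + m}"] by simp
    then show ?thesis using False F2 by simp
  qed
qed

lemma R_step_bound:
  fixes P Q :: "nat \<Rightarrow> bool" and A :: "nat set" and c :: real
  assumes "\<And>v. v \<le> k \<Longrightarrow> measure (S k v) A \<le> (if P v then 1 else 0) + c * (if Q v then 1 else 0)"
    and "c \<ge> 0"
  shows "measure (R (Suc k)) A \<le> measure (R k) {v. P v} + c * measure (R k) {v. Q v}"
proof -
  have "measure (R (Suc k)) A = (\<integral>v. measure (S k v) A \<partial>measure_pmf (R k))"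
    by (simp add: R_Suc measure_bind_pmf_real)
  also have "\<dots> \<le> (\<integral>v. indicator {v. P v} v + c * indicator {v. Q v} v \<partial>measure_pmf (R k))"
  proof (rule integral_mono_AE)
    show "integrable (measure_pmf (R k)) (\<lambda>v. measure (S k v) A)"
      by (auto intro!: measure_pmf.integrable_const_bound[where B=1])
    show "integrable (measure_pmf (R k)) (\<lambda>v. indicator {v. P v} v + c * indicator {v. Q v} v :: real)"
      using assms(2) by (auto intro!: measure_pmf.integrable_const_bound[where B="1 + c"] simp: indicator_def)
    show "AE v in measure_pmf (R k). measure (S k v) A \<le> indicator {v. P v} v + c * indicator {v. Q v} v"
      unfolding AE_measure_pmf_iff using assms(1) set_R by (fastforce simp: indicator_def)
  qed
  also have "\<dots> = measure (R k) {v. P v} + c * measure (R k) {v. Q v}"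
  proof -
    have i1: "integrable (measure_pmf (R k)) (\<lambda>v. indicator {v. P v} v :: real)"
      by (auto intro!: measure_pmf.integrable_const_bound[where B=1] simp: indicator_def)
    have i2: "integrable (measure_pmf (R k)) (\<lambda>v. c * indicator {v. Q v} v :: real)"
    proof (rule integrable_mult_right)
      show "integrable (measure_pmf (R k)) (\<lambda>v. indicator {v. Q v} v :: real)"
        by (auto intro!: measure_pmf.integrable_const_bound[where B=1] simp: indicator_def)
    qed
    have "(\<integral>v. indicator {v. P v} v + c * indicator {v. Q v} v \<partial>measure_pmf (R k))
       = (\<integral>v. indicator {v. P v} v \<partial>measure_pmf (R k)) + (\<integral>v. c * indicator {v. Q v} v \<partial>measure_pmf (R k))"
      by (rule Bochner_Integration.integral_add[OF i1 i2])
    also have "\<dots> = measure (R k) {v. P v} + c * measure (R k) {v. Q v}"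
      by (simp only: integral_mult_right_zero integral_indicator) simp
    finally show ?thesis .
  qed
  finally show ?thesis .
qed

lemma decay_lemma:
  fixes a e q :: "nat \<Rightarrow> real"
  assumes a0: "\<And>k. 0 \<le> a k" and a1: "\<And>k. a k \<le> 1" and step: "\<And>k. a (Suc k) \<le> e k + q k * a k"
    and e: "e \<longlonglongrightarrow> 0" and q: "q \<longlonglongrightarrow> 0" and q0: "\<And>k. 0 \<le> q k"
  shows "a \<longlonglongrightarrow> 0"
proof (rule LIMSEQ_I)
  fix r :: real assume r: "0 < r"
  have "\<forall>\<^sub>F k in sequentially. dist (e k) 0 < r/4" using tendstoD[OF e, of "r/4"] r by simp
  moreover have "\<forall>\<^sub>F k in sequentially. dist (q k) 0 < 1/2" using tendstoD[OF q, of "1/2"] by simp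
  ultimately have "\<forall>\<^sub>F k in sequentially. dist (e k) 0 < r/4 \<and> dist (q k) 0 < 1/2" by (rule eventually_conj)
  then obtain K where K0: "\<And>k. k \<ge> K \<Longrightarrow> dist (e k) 0 < r/4 \<and> dist (q k) 0 < 1/2"
    unfolding eventually_sequentially by blast
  have K: "e k \<le> r/4 \<and> q k \<le> 1/2" if "k \<ge> K" for k
    using K0[OF that] by (simp add: dist_real_def) (smt (verit) abs_ge_self)
  have ind: "a (K + n) \<le> r/2 + (1/2)^n" for n
  proof (induction n)
    case 0 then show ?case using a1[of K] r by simp
  next
    case (Suc n)
    have "a (K + Suc n) \<le> e (K + n) + q (K + n) * a (K + n)" using step[of "K + n"] by simp
    also have "\<dots> \<le> r/4 + (1/2) * a (K + n)"
      using K[of "K+n"] a0[of "K+n"] by (intro add_mono mult_right_mono) auto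
    also have "\<dots> \<le> r/4 + (1/2) * (r/2 + (1/2)^n)" using Suc.IH by simp
    also have "\<dots> \<le> r/2 + (1/2)^Suc n"
    proof -
      have A: "(1/2::real)^Suc n = (1/2)^n / 2" by simp
      have B: "\<And>y::real. r/4 + 1/2 * (r/2 + y) \<le> r/2 + y/2" by (simp add: algebra_simps)
      show ?thesis by (subst A) (rule B)
    qed
    finally show ?case .
  qed
  obtain n0 where n0: "(1/2::real)^n0 < r/2" using real_arch_pow_inv[of "r/2" "1/2"] r by auto
  show "\<exists>no. \<forall>n\<ge>no. norm (a n - 0) < r"
  proof (intro exI allI impI)
    fix n assume "n \<ge> K + n0"
    then obtain d where d: "n = K + (n0 + d)" using le_Suc_ex by (metis add.assoc)
    have "(1/2::real)^(n0+d) \<le> (1/2)^n0" by (rule power_decreasing) auto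
    then have "a n < r" unfolding d using ind[of "n0+d"] n0 by linarith
    then show "norm (a n - 0) < r" using a0[of n] by simp
  qed
qed

lemma R_lim_aux:
  fixes A B :: "nat \<Rightarrow> nat \<Rightarrow> nat set"
  assumes st: "\<And>k m. measure (R (Suc k)) (A (Suc k) m) \<le> measure (R k) (B k m) + (real m+1)/(real k+2) * measure (R k) (A k m)"
    and b0: "\<And>k. measure (R k) (B k 0) = 0" and bs: "\<And>k m. B k (Suc m) = A k m"
  shows "(\<lambda>k. measure (R k) (A k m)) \<longlonglongrightarrow> 0"
proof (induction m)
  case 0
  show ?case
  proof (rule decay_lemma[where e="\<lambda>k. measure (R k) (B k 0)" and q="\<lambda>k. (real 0+1)/(real k+2)"])
    show "(\<lambda>k. measure (R k) (B k 0)) \<longlonglongrightarrow> 0" by (simp add: b0)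
    show "(\<lambda>k. (real 0+1)/(real k+2)) \<longlonglongrightarrow> 0" by real_asymp
  qed (rule st | simp)+
next
  case (Suc m)
  show ?case
  proof (rule decay_lemma[where e="\<lambda>k. measure (R k) (B k (Suc m))" and q="\<lambda>k. (real (Suc m)+1)/(real k+2)"])
    show "(\<lambda>k. measure (R k) (B k (Suc m))) \<longlonglongrightarrow> 0" by (simp add: bs Suc.IH)
    show "(\<lambda>k. (real (Suc m)+1)/(real k+2)) \<longlonglongrightarrow> 0" by real_asymp
  qed (rule st | simp)+
qed

lemma lim1: "(\<lambda>k. measure (R k) {v. v \<le> m}) \<longlonglongrightarrow> 0"
proof (rule R_lim_aux[where A="\<lambda>k m. {v. v \<le> m}" and B="\<lambda>k m. {v. v < m}"])
  fix k m
  show "measure (R (Suc k)) {v. v \<le> m} \<le> measure (R k) {v. v < m} + (real m+1)/(real k+2) * measure (R k) {v. v \<le> m}"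
    by (rule R_step_bound[where P="\<lambda>v. v < m" and Q="\<lambda>v. v \<le> m"], erule S_bound1, simp)
qed (auto simp: less_Suc_eq_le)

lemma lim2: "(\<lambda>k. measure (R k) {v. k \<le> v + m}) \<longlonglongrightarrow> 0"
proof (rule R_lim_aux[where A="\<lambda>k m. {v. k \<le> v + m}" and B="\<lambda>k m. {v. k < v + m}"])
  fix k m
  show "measure (R (Suc k)) {v. Suc k \<le> v + m} \<le> measure (R k) {v. k < v + m} + (real m+1)/(real k+2) * measure (R k) {v. k \<le> v + m}"
    by (rule R_step_bound[where P="\<lambda>v. k < v + m" and Q="\<lambda>v. k \<le> v + m"], erule S_bound2, simp)
next
  fix k
  show "measure (R k) {v. k < v + 0} = 0"
    unfolding measure_pmf_zero_iff using set_R[of k] by auto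
qed auto

locale E = prob_space M for M :: "'a measure" +
  fixes V :: "nat \<Rightarrow> 'a \<Rightarrow> nat"
  assumes Vm[measurable]: "\<And>k. V k \<in> measurable M (count_space UNIV)"
    and cyl: "\<And>k vs. measure M {\<omega> \<in> space M. \<forall>i\<le>k. V i \<omega> = vs i} = euler_path_prob k vs"
begin

definition H :: "nat \<Rightarrow> 'a \<Rightarrow> nat list" where "H k \<omega> = map (\<lambda>i. V i \<omega>) [0..<Suc k]"

lemma V_pre: "{\<omega> \<in> space M. V k \<omega> \<in> A} \<in> sets M"
proof -
  have "V k -` A \<inter> space M \<in> sets M" by (rule measurable_sets[OF Vm]) simp
  moreover have "V k -` A \<inter> space M = {\<omega> \<in> space M. V k \<omega> \<in> A}" by auto
  ultimately show ?thesis by simp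
qed

lemma cyl_sets: "{\<omega> \<in> space M. \<forall>i\<le>k. V i \<omega> = vs i} \<in> sets M"
proof -
  have "{\<omega> \<in> space M. \<forall>i\<in>{..k}. V i \<omega> = vs i} \<in> sets M"
    by (rule sets.sets_Collect_finite_All) (use V_pre[of _ "{vs _}"] in auto)
  then show ?thesis by simp
qed

lemma map_upt_eq: "(map f [0..<n] = xs) \<longleftrightarrow> (length xs = n \<and> (\<forall>i<n. f i = xs ! i))"
  by (auto simp: list_eq_iff_nth_eq simp del: upt_Suc)

lemma H_eq: "(H k \<omega> = xs) \<longleftrightarrow> (length xs = Suc k \<and> (\<forall>i\<le>k. V i \<omega> = xs ! i))"
  unfolding H_def map_upt_eq by (simp only: less_Suc_eq_le)

lemma H_len: "length (H k \<omega>) = Suc k"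
  unfolding H_def by (simp del: upt_Suc)

lemma H_nth: "j \<le> k \<Longrightarrow> H k \<omega> ! j = V j \<omega>"
  unfolding H_def by (subst nth_map) (auto simp del: upt_Suc)

lemma H_last: "last (H k \<omega>) = V k \<omega>"
proof -
  have "H k \<omega> \<noteq> []" using H_len[of k \<omega>] by auto
  then show ?thesis by (simp add: last_conv_nth H_len H_nth)
qed

lemma H_pre: "H k -` {xs} \<inter> space M = (if length xs = Suc k then {\<omega> \<in> space M. \<forall>i\<le>k. V i \<omega> = xs ! i} else {})"
  using H_eq[of k _ xs] by auto

lemma H_meas: "H k \<in> measurable M (count_space UNIV)"
  unfolding measurable_count_space_eq2_countable
  by (auto simp: H_pre cyl_sets)

lemma distr_H: "distr M (count_space UNIV) (H k) = measure_pmf (Q k)"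
proof (rule measure_eqI_countable[where A=UNIV])
  fix a :: "nat list"
  have "emeasure (distr M (count_space UNIV) (H k)) {a} = emeasure M (H k -` {a} \<inter> space M)"
    by (rule emeasure_distr[OF H_meas]) simp
  also have "\<dots> = ennreal (pmf (Q k) a)"
    by (simp add: H_pre pmf_Q emeasure_eq_measure cyl)
  finally show "emeasure (distr M (count_space UNIV) (H k)) {a} = emeasure (measure_pmf (Q k)) {a}"
    by (simp add: emeasure_pmf_single)
qed auto

lemma prob_H: "measure M {\<omega> \<in> space M. H k \<omega> \<in> A} = measure (Q k) A"
proof -
  have "measure (Q k) A = measure (distr M (count_space UNIV) (H k)) A" by (simp add: distr_H)
  also have "\<dots> = measure M (H k -` A \<inter> space M)"
    by (rule measure_distr[OF H_meas]) simp
  moreover have "H k -` A \<inter> space M = {\<omega> \<in> space M. H k \<omega> \<in> A}" by auto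
  ultimately show ?thesis by simp
qed

lemma prob_V: "measure M {\<omega> \<in> space M. V k \<omega> \<in> A} = measure (R k) A"
proof -
  have "{\<omega> \<in> space M. V k \<omega> \<in> A} = {\<omega> \<in> space M. H k \<omega> \<in> last -` A}"
    by (auto simp: H_last)
  then show ?thesis using prob_H[of k "last -` A"] by (simp add: R_def)
qed

lemma AE_step: "AE \<omega> in M. V (Suc i) \<omega> = V i \<omega> \<or> V (Suc i) \<omega> = Suc (V i \<omega>)"
proof -
  let ?B = "{xs. \<not> (xs ! Suc i = xs ! i \<or> xs ! Suc i = Suc (xs ! i))}"
  have N: "{\<omega> \<in> space M. \<not> (V (Suc i) \<omega> = V i \<omega> \<or> V (Suc i) \<omega> = Suc (V i \<omega>))} = {\<omega> \<in> space M. H (Suc i) \<omega> \<in> ?B}"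
    by (auto simp: H_nth)
  have "measure (Q (Suc i)) ?B = 0"
    unfolding measure_pmf_zero_iff using set_Q_step by blast
  then have "emeasure M {\<omega> \<in> space M. H (Suc i) \<omega> \<in> ?B} = 0"
    using prob_H[of "Suc i" ?B] by (simp add: emeasure_eq_measure)
  moreover have "{\<omega> \<in> space M. H (Suc i) \<omega> \<in> ?B} \<in> sets M"
  proof -
    have "H (Suc i) -` ?B \<inter> space M \<in> sets M" by (rule measurable_sets[OF H_meas]) simp
    moreover have "H (Suc i) -` ?B \<inter> space M = {\<omega> \<in> space M. H (Suc i) \<omega> \<in> ?B}" by auto
    ultimately show ?thesis by simp
  qed
  ultimately show ?thesis by (subst AE_iff_measurable[OF _ N]) auto
qed


lemma null_lemma:
  assumes lim: "(\<lambda>k. measure M {\<omega> \<in> space M. P k \<omega>}) \<longlonglongrightarrow> 0"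
    and sets: "\<And>k. {\<omega> \<in> space M. P k \<omega>} \<in> sets M"
  shows "AE \<omega> in M. \<exists>k. \<not> P k \<omega>"
proof -
  let ?N = "{\<omega> \<in> space M. \<forall>k. P k \<omega>}"
  have Ns: "?N \<in> sets M" using sets by (rule sets.sets_Collect_countable_All)
  have "measure M ?N \<le> 0"
  proof (rule LIMSEQ_le_const[OF lim])
    show "\<exists>N. \<forall>n\<ge>N. measure M ?N \<le> measure M {\<omega> \<in> space M. P n \<omega>}"
      using sets by (auto intro!: finite_measure_mono)
  qed
  then have "emeasure M ?N = 0" by (simp add: emeasure_eq_measure measure_le_0_iff)
  then show ?thesis by (subst AE_iff_measurable[OF Ns]) auto
qed

lemma main: "AE \<omega> in M. filterlim (\<lambda>k. V k \<omega>) at_top sequentially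
                  \<and> filterlim (\<lambda>k. real k - real (V k \<omega>)) at_top sequentially"
proof -
  have A1: "AE \<omega> in M. \<forall>i. V (Suc i) \<omega> = V i \<omega> \<or> V (Suc i) \<omega> = Suc (V i \<omega>)"
    using AE_step by (simp add: AE_all_countable)
  have A2: "AE \<omega> in M. \<forall>m. \<exists>k. \<not> V k \<omega> \<le> m"
  proof (subst AE_all_countable, intro allI)
    fix m
    show "AE \<omega> in M. \<exists>k. \<not> V k \<omega> \<le> m"
    proof (rule null_lemma)
      show "(\<lambda>k. measure M {\<omega> \<in> space M. V k \<omega> \<le> m}) \<longlonglongrightarrow> 0"
        using lim1[of m] prob_V[of _ "{v. v \<le> m}"] by simp
      show "{\<omega> \<in> space M. V k \<omega> \<le> m} \<in> sets M" for k using V_pre[of k "{v. v \<le> m}"] by simp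
    qed
  qed
  have A3: "AE \<omega> in M. \<forall>m. \<exists>k. \<not> k \<le> V k \<omega> + m"
  proof (subst AE_all_countable, intro allI)
    fix m
    show "AE \<omega> in M. \<exists>k. \<not> k \<le> V k \<omega> + m"
    proof (rule null_lemma)
      show "(\<lambda>k. measure M {\<omega> \<in> space M. k \<le> V k \<omega> + m}) \<longlonglongrightarrow> 0"
        using lim2[of m] prob_V[of _ "{v. _ \<le> v + m}"] by simp
      show "{\<omega> \<in> space M. k \<le> V k \<omega> + m} \<in> sets M" for k using V_pre[of k "{v. k \<le> v + m}"] by simp
    qed
  qed
  show ?thesis
    using A1 A2 A3
  proof eventually_elim
    case (elim \<omega>)
    then have inc: "\<forall>i. V (Suc i) \<omega> = V i \<omega> \<or> V (Suc i) \<omega> = Suc (V i \<omega>)"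
      and ub: "\<forall>m. \<exists>k. \<not> V k \<omega> \<le> m" and ub2: "\<forall>m. \<exists>k. \<not> k \<le> V k \<omega> + m" by auto
    have mono1: "incseq (\<lambda>k. V k \<omega>)"
      apply (rule incseq_SucI)
      subgoal for n using spec[OF inc, of n] by auto
      done
    have mono2: "incseq (\<lambda>k. real k - real (V k \<omega>))"
      apply (rule incseq_SucI)
      subgoal for n using spec[OF inc, of n] by auto
      done
    have "filterlim (\<lambda>k. V k \<omega>) at_top sequentially"
      unfolding filterlim_at_top
    proof
      fix Z
      obtain k where k: "Z < V k \<omega>" using ub by (meson not_le)
      show "\<forall>\<^sub>F x in sequentially. Z \<le> V x \<omega>"
        unfolding eventually_sequentially
      proof (intro exI allI impI)
        fix n assume "k \<le> n"
        then have "V k \<omega> \<le> V n \<omega>" using mono1 by (simp add: incseq_def)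
        then show "Z \<le> V n \<omega>" using k by simp
      qed
    qed
    moreover have "filterlim (\<lambda>k. real k - real (V k \<omega>)) at_top sequentially"
      unfolding filterlim_at_top
    proof
      fix Z :: real
      obtain k where k: "\<not> k \<le> V k \<omega> + nat \<lceil>Z\<rceil>" using ub2 by blast
      then have "Z \<le> real k - real (V k \<omega>)" by linarith
      then show "\<forall>\<^sub>F x in sequentially. Z \<le> real x - real (V x \<omega>)"
        unfolding eventually_sequentially
      proof (intro exI allI impI)
        fix n assume "k \<le> n"
        then have "real k - real (V k \<omega>) \<le> real n - real (V n \<omega>)" using mono2 by (simp add: incseq_def)
        then show "Z \<le> real n - real (V n \<omega>)" using \<open>Z \<le> real k - real (V k \<omega>)\<close> by simp
      qed
    qed
    ultimately show ?case by blast
  qed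
qed

end

theorem lemma7p1:
  fixes M :: "'a measure" and V :: "nat \<Rightarrow> 'a \<Rightarrow> nat"
  assumes "prob_space M"
    and "\<And>k. V k \<in> measurable M (count_space UNIV)"
    and "\<And>k vs. measure M {\<omega> \<in> space M. \<forall>i\<le>k. V i \<omega> = vs i} = euler_path_prob k vs"
  shows "AE \<omega> in M. filterlim (\<lambda>k. V k \<omega>) at_top sequentially
                  \<and> filterlim (\<lambda>k. real k - real (V k \<omega>)) at_top sequentially"
proof -
  have "E M V" unfolding E_def E_axioms_def using assms by auto
  then show ?thesis by (rule E.main)
qed

end
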